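(* Let $f:\mathcal{X}\to\mathcal{Y}$ be a fixed model, $\mathcal{A}:\mathcal{Y}\times\mathcal{E}\to\mathbb{R}$ an alignment function, $c\in\mathbb{R}$ a threshold, and $g:\mathcal{X}\to\mathbb{R}$ a fixed alignment predictor (e.g. fitted on a training set disjoint from, and independent of, the calibration and test data) with $\sup_{x}|g(x)|\le \bar M$ for some $\bar M>0$. Let $Z_i=(X_i,E_i)$, $i\in\mathcal{D}_{\mathrm{cal}}\cup\{n+1,\dots,n+m\}$, be calibration and test units, with $A_i=\mathcal{A}(f(X_i),E_i)$ and $\hat A_i=g(X_i)$. Suppose that for every $j\in[m]$, the collection $\{Z_{n+j}\}\cup\{Z_i\}_{i\in\mathcal{D}_{\mathrm{cal}}}$ is exchangeable conditional on $\{Z_{n+\ell}\}_{\ell\ne j}$ (i.e. its conditional joint law given $\{Z_{n+\ell}\}_{\ell\neq j}$ is invariant under every permutation of these units), and that the values $\{\hat A_i\}_{i\in\mathcal{D}_{\mathrm{cal}}\cup\{n+1,\dots,n+m\}}$ have no ties almost surely. Then for every $\alpha\in(0,1)$, the selection set $\mathcal{S}$ output by Conformal Alignment (defined in the context) satisfies $$\mathrm{FDR}=\mathbb{E}\Big[\frac{\sum_{j=1}^m \mathbf{1}\{A_{n+j}\le c,\ j\in\mathcal{S}\}}{\max(|\mathcal{S}|,1)}\Big]\le \alpha .$$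
   Context: Conformal Alignment: given calibration indices $\mathcal{D}_{\mathrm{cal}}$ (with observed $A_i$) and test indices $n+1,\dots,n+m$ (where $A_{n+j}$ is unobserved), define for each $j\in[m]$ the conformal p-value $$p_j=\frac{1+\sum_{i\in\mathcal{D}_{\mathrm{cal}}}\mathbf{1}\{A_i\le c,\ \hat A_i\ge \hat A_{n+j}\}}{|\mathcal{D}_{\mathrm{cal}}|+1}.$$ Let $p_{(1)}\le\dots\le p_{(m)}$ be the ordered p-values, $k^*=\max\{k\in[m]: p_{(k)}\le \alpha k/m\}$ (with $\max\emptyset=0$), and $\mathcal{S}=\{j\in[m]: p_j\le \alpha k^*/m\}$ (the Benjamini–Hochberg rejection set at level $\alpha$). The expectation in FDR is over the randomness of calibration and test data. *)

theory Defs
  imports "HOL-Probability.Probability" "HOL-Combinatorics.Permutations"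
begin

definition conf_pval ::
  "nat set \<Rightarrow> nat \<Rightarrow> real \<Rightarrow> (nat \<Rightarrow> real) \<Rightarrow> (nat \<Rightarrow> real) \<Rightarrow> nat \<Rightarrow> real" where
  "conf_pval Dcal n c A Ahat j =
     (1 + real (card {i \<in> Dcal. A i \<le> c \<and> Ahat i \<ge> Ahat (n + j)})) / (real (card Dcal) + 1)"

definition ord_pval :: "nat \<Rightarrow> (nat \<Rightarrow> real) \<Rightarrow> nat \<Rightarrow> real" where
  "ord_pval m p k = sort (map p [1..<m+1]) ! (k - 1)"

definition BH_kstar :: "real \<Rightarrow> nat \<Rightarrow> (nat \<Rightarrow> real) \<Rightarrow> nat" where
  "BH_kstar \<alpha> m p = Max ({k \<in> {1..m}. ord_pval m p k \<le> \<alpha> * real k / real m} \<union> {0})"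

definition BH_set :: "real \<Rightarrow> nat \<Rightarrow> (nat \<Rightarrow> real) \<Rightarrow> nat set" where
  "BH_set \<alpha> m p = {j \<in> {1..m}. p j \<le> \<alpha> * real (BH_kstar \<alpha> m p) / real m}"

definition CA_sel ::
  "real \<Rightarrow> nat set \<Rightarrow> nat \<Rightarrow> nat \<Rightarrow> real \<Rightarrow> (nat \<Rightarrow> real) \<Rightarrow> (nat \<Rightarrow> real) \<Rightarrow> nat set" where
  "CA_sel \<alpha> Dcal n m c A Ahat = BH_set \<alpha> m (conf_pval Dcal n c A Ahat)"

end

theory Submission
  imports Defs
begin


definition cnt :: "nat \<Rightarrow> (nat \<Rightarrow> real) \<Rightarrow> real \<Rightarrow> nat" where
  "cnt m p x = card {l \<in> {1..m}. p l \<le> x}"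

lemma sorted_nth_le_iff:
  fixes xs :: "real list"
  assumes "sorted xs" "1 \<le> k" "k \<le> length xs"
  shows "(xs ! (k - 1) \<le> x) \<longleftrightarrow> k \<le> length (filter (\<lambda>y. y \<le> x) xs)"
proof -
  have L: "length (filter (\<lambda>y. y \<le> x) xs) = card {i. i < length xs \<and> xs ! i \<le> x}"
    by (rule length_filter_conv_card)
  show ?thesis
  proof
    assume h: "xs ! (k - 1) \<le> x"
    have "{0..<k} \<subseteq> {i. i < length xs \<and> xs ! i \<le> x}"
    proof
      fix i assume "i \<in> {0..<k}"
      then have "i \<le> k - 1" "i < length xs" using assms by auto
      then have "xs ! i \<le> xs ! (k - 1)" using assms sorted_nth_mono by (metis One_nat_def Suc_pred' diff_less le_less_trans zero_less_one assms(2) less_le_trans)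
      then show "i \<in> {i. i < length xs \<and> xs ! i \<le> x}" using h \<open>i < length xs\<close> by auto
    qed
    from card_mono[OF _ this] show "k \<le> length (filter (\<lambda>y. y \<le> x) xs)" unfolding L by simp
  next
    assume h: "k \<le> length (filter (\<lambda>y. y \<le> x) xs)"
    show "xs ! (k - 1) \<le> x"
    proof (rule ccontr)
      assume "\<not> xs ! (k - 1) \<le> x"
      have "{i. i < length xs \<and> xs ! i \<le> x} \<subseteq> {0..<k-1}"
      proof
        fix i assume i: "i \<in> {i. i < length xs \<and> xs ! i \<le> x}"
        show "i \<in> {0..<k-1}"
        proof (rule ccontr)
          assume "i \<notin> {0..<k-1}"
          then have "k - 1 \<le> i" by auto
          then have "xs ! (k-1) \<le> xs ! i" using i assms(1) sorted_nth_mono by blast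
          then show False using i \<open>\<not> xs ! (k - 1) \<le> x\<close> by auto
        qed
      qed
      from card_mono[OF _ this] h show False unfolding L using assms by simp
    qed
  qed
qed

lemma cnt_list: "cnt m p x = length (filter (\<lambda>y. y \<le> x) (sort (map p [1..<m+1])))"
proof -
  have "length (filter (\<lambda>y. y \<le> x) (sort (map p [1..<m+1])))
      = size (filter_mset (\<lambda>y. y \<le> x) (mset (sort (map p [1..<m+1]))))"
    by (metis mset_filter size_mset)
  also have "\<dots> = size (filter_mset (\<lambda>y. y \<le> x) (mset (map p [1..<m+1])))" by simp
  also have "\<dots> = size (mset (filter (\<lambda>y. y \<le> x) (map p [1..<m+1])))"
    by (simp only: mset_filter)
  also have "\<dots> = length (map p (filter (\<lambda>l. p l \<le> x) [1..<m+1]))"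
    by (simp only: size_mset filter_map comp_def)
  also have "\<dots> = length (filter (\<lambda>l. p l \<le> x) [1..<m+1])"
    by (simp only: length_map)
  also have "\<dots> = card (set (filter (\<lambda>l. p l \<le> x) [1..<m+1]))"
    by (rule distinct_card[symmetric]) simp
  also have "set (filter (\<lambda>l. p l \<le> x) [1..<m+1]) = {l \<in> {1..m}. p l \<le> x}" by auto
  finally show ?thesis unfolding cnt_def by simp
qed

lemma ord_pval_le_iff:
  assumes "1 \<le> k" "k \<le> m"
  shows "ord_pval m p k \<le> x \<longleftrightarrow> k \<le> cnt m p x"
  unfolding ord_pval_def cnt_list
  by (rule sorted_nth_le_iff) (use assms in auto)

lemma BH_kstar_cnt:
  "BH_kstar \<alpha> m p = Max ({k \<in> {1..m}. k \<le> cnt m p (\<alpha> * real k / real m)} \<union> {0})"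
proof -
  have "{k \<in> {1..m}. ord_pval m p k \<le> \<alpha> * real k / real m} = {k \<in> {1..m}. k \<le> cnt m p (\<alpha> * real k / real m)}"
    using ord_pval_le_iff by auto
  then show ?thesis unfolding BH_kstar_def by simp
qed

lemma BH_set_cnt: "card (BH_set \<alpha> m p) = cnt m p (\<alpha> * real (BH_kstar \<alpha> m p) / real m)"
  unfolding BH_set_def cnt_def by simp

lemma BH_kstar_le_card:
  assumes "1 \<le> BH_kstar \<alpha> m p"
  shows "BH_kstar \<alpha> m p \<le> card (BH_set \<alpha> m p)"
proof -
  let ?S = "{k \<in> {1..m}. k \<le> cnt m p (\<alpha> * real k / real m)} \<union> {0}"
  have "finite ?S" by auto
  then have "BH_kstar \<alpha> m p \<in> ?S" unfolding BH_kstar_cnt by (intro Max_in) auto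
  with assms show ?thesis unfolding BH_set_cnt by auto
qed

lemma BH_kstar_cong:
  assumes "\<And>l. l \<in> {1..m} \<Longrightarrow> p l = q l"
  shows "BH_kstar \<alpha> m p = BH_kstar \<alpha> m q"
proof -
  have "cnt m p = cnt m q" unfolding cnt_def using assms by (intro ext arg_cong[where f=card]) auto
  then show ?thesis unfolding BH_kstar_cnt by simp
qed

lemma BH_set_cong:
  assumes "\<And>l. l \<in> {1..m} \<Longrightarrow> p l = q l"
  shows "BH_set \<alpha> m p = BH_set \<alpha> m q"
  unfolding BH_set_def using BH_kstar_cong[OF assms] assms by auto

lemma BH_stable:
  assumes alpha: "0 \<le> \<alpha>"
    and le: "\<And>l. l \<in> {1..m} \<Longrightarrow> q l \<le> p l"
    and ne: "\<And>l. l \<in> {1..m} \<Longrightarrow> q l \<noteq> p l \<Longrightarrow> p l \<le> \<alpha> * real (BH_kstar \<alpha> m p) / real m"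
  shows "BH_kstar \<alpha> m q = BH_kstar \<alpha> m p \<and> BH_set \<alpha> m q = BH_set \<alpha> m p"
proof -
  define K where "K = BH_kstar \<alpha> m p"
  have mono: "\<And>k. K \<le> k \<Longrightarrow> \<alpha> * real K / real m \<le> \<alpha> * real k / real m"
    using alpha by (intro divide_right_mono mult_left_mono) auto
  have equiv: "\<And>k l. K \<le> k \<Longrightarrow> l \<in> {1..m} \<Longrightarrow> (q l \<le> \<alpha> * real k / real m) = (p l \<le> \<alpha> * real k / real m)"
  proof -
    fix k l assume "K \<le> k" "l \<in> {1..m}"
    then show "(q l \<le> \<alpha> * real k / real m) = (p l \<le> \<alpha> * real k / real m)"
      using le[of l] ne[of l] mono[of k] unfolding K_def[symmetric] by (cases "q l = p l") auto
  qed
  have cnteq: "\<And>k. K \<le> k \<Longrightarrow> cnt m q (\<alpha> * real k / real m) = cnt m p (\<alpha> * real k / real m)"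
    unfolding cnt_def using equiv by (intro arg_cong[where f=card]) auto
  have cntge: "\<And>x. cnt m p x \<le> cnt m q x"
    unfolding cnt_def using le by (intro card_mono) (auto intro: order_trans)
  let ?Sp = "{k \<in> {1..m}. k \<le> cnt m p (\<alpha> * real k / real m)} \<union> {0}"
  let ?Sq = "{k \<in> {1..m}. k \<le> cnt m q (\<alpha> * real k / real m)} \<union> {0}"
  have finp: "finite ?Sp" and finq: "finite ?Sq" by auto
  have Kin: "K \<in> ?Sp" unfolding K_def BH_kstar_cnt using finp by (intro Max_in) auto
  have Kmax: "\<And>k. k \<in> ?Sp \<Longrightarrow> k \<le> K" unfolding K_def BH_kstar_cnt using finp by (intro Max_ge) auto
  have "Max ?Sq = K"
  proof (rule Max_eqI[OF finq])
    show "K \<in> ?Sq" using Kin cntge[of "\<alpha> * real K / real m"] by auto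
  next
    fix k assume k: "k \<in> ?Sq"
    show "k \<le> K"
    proof (rule ccontr)
      assume "\<not> k \<le> K"
      then have "k \<in> ?Sp" using k cnteq[of k] by auto
      then show False using Kmax \<open>\<not> k \<le> K\<close> by blast
    qed
  qed
  then have kq: "BH_kstar \<alpha> m q = K" unfolding BH_kstar_cnt .
  moreover have "BH_set \<alpha> m q = BH_set \<alpha> m p"
    unfolding BH_set_def kq K_def[symmetric] using equiv[of K] by auto
  ultimately show ?thesis unfolding K_def by simp
qed

lemma card_rank_le:
  fixes V :: "nat \<Rightarrow> real"
  assumes fin: "finite B" and inj: "inj_on V B" and T: "0 \<le> T"
  shows "real (card {u \<in> B. real (card {v \<in> B. V u \<le> V v}) \<le> T}) \<le> T"
proof -
  let ?h = "\<lambda>u. card {v \<in> B. V u \<le> V v}"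
  let ?S = "{u \<in> B. real (?h u) \<le> T}"
  have injh: "inj_on ?h B"
  proof (rule inj_onI)
    fix u w assume u: "u \<in> B" and w: "w \<in> B" and eq: "?h u = ?h w"
    show "u = w"
    proof (rule ccontr)
      assume "u \<noteq> w"
      then have "V u \<noteq> V w" using inj u w by (auto dest: inj_onD)
      then consider "V u < V w" | "V w < V u" by linarith
      then show False
      proof cases
        case 1
        have s1: "{v \<in> B. V w \<le> V v} \<subseteq> {v \<in> B. V u \<le> V v}" using 1 by auto
        have s2: "u \<in> {v \<in> B. V u \<le> V v}" "u \<notin> {v \<in> B. V w \<le> V v}" using 1 u by auto
        have "{v \<in> B. V w \<le> V v} \<subset> {v \<in> B. V u \<le> V v}" using s1 s2 by blast
        from psubset_card_mono[OF _ this] fin eq show False by auto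
      next
        case 2
        have s1: "{v \<in> B. V u \<le> V v} \<subseteq> {v \<in> B. V w \<le> V v}" using 2 by auto
        have s2: "w \<in> {v \<in> B. V w \<le> V v}" "w \<notin> {v \<in> B. V u \<le> V v}" using 2 w by auto
        have "{v \<in> B. V u \<le> V v} \<subset> {v \<in> B. V w \<le> V v}" using s1 s2 by blast
        from psubset_card_mono[OF _ this] fin eq show False by auto
      qed
    qed
  qed
  have "?h ` ?S \<subseteq> {1..nat (floor T)}"
  proof
    fix y assume "y \<in> ?h ` ?S"
    then obtain u where u: "u \<in> B" "real (?h u) \<le> T" "y = ?h u" by auto
    have "u \<in> {v \<in> B. V u \<le> V v}" using u by auto
    then have "0 < ?h u" using fin by (subst card_gt_0_iff) auto
    then have "1 \<le> ?h u" by simp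
    moreover have "?h u \<le> nat (floor T)" using u(2) by (simp add: le_nat_floor)
    ultimately show "y \<in> {1..nat (floor T)}" using u by auto
  qed
  from card_mono[OF finite_atLeastAtMost this] have "card (?h ` ?S) \<le> nat (floor T)" by simp
  moreover have "card (?h ` ?S) = card ?S" by (rule card_image) (rule inj_on_subset[OF injh], auto)
  ultimately have "card ?S \<le> nat (floor T)" by simp
  then have "real (card ?S) \<le> real (nat (floor T))" by simp
  also have "\<dots> \<le> T" using T by linarith
  finally show ?thesis .
qed



definition pv :: "nat set \<Rightarrow> nat \<Rightarrow> nat set \<times> (nat \<times> nat) set \<Rightarrow> nat \<Rightarrow> real" where
  "pv Dcal n NC j = (1 + real (card {i \<in> Dcal. i \<in> fst NC \<and> (n + j, i) \<in> snd NC})) / (real (card Dcal) + 1)"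

definition Fv :: "real \<Rightarrow> nat set \<Rightarrow> nat \<Rightarrow> nat \<Rightarrow> nat set \<times> (nat \<times> nat) set \<Rightarrow> nat \<Rightarrow> real" where
  "Fv \<alpha> Dcal n m NC j = (if n + j \<in> fst NC \<and> j \<in> BH_set \<alpha> m (pv Dcal n NC)
      then 1 / real (max (card (BH_set \<alpha> m (pv Dcal n NC))) 1) else 0)"

definition qv :: "nat set \<Rightarrow> nat \<Rightarrow> nat \<Rightarrow> nat set \<times> (nat \<times> nat) set \<Rightarrow> nat \<Rightarrow> real" where
  "qv Dcal n j NC l = (if l = j then 0 else
      real (card {i \<in> Dcal \<union> {n + j}. i \<in> fst NC \<and> (n + l, i) \<in> snd NC}) / (real (card Dcal) + 1))"

definition Gv :: "real \<Rightarrow> nat set \<Rightarrow> nat \<Rightarrow> nat \<Rightarrow> nat set \<times> (nat \<times> nat) set \<Rightarrow> nat \<Rightarrow> real" where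
  "Gv \<alpha> Dcal n m NC j = (let K = BH_kstar \<alpha> m (qv Dcal n j NC) in
      if n + j \<in> fst NC \<and> 1 \<le> K \<and> pv Dcal n NC j \<le> \<alpha> * real K / real m then 1 / real K else 0)"

definition Cdat :: "nat set \<Rightarrow> (nat \<Rightarrow> real) \<Rightarrow> (nat \<times> nat) set" where
  "Cdat I V = {(a, b) \<in> I \<times> I. V a \<le> V b}"

lemma Gv_nonneg: "0 \<le> Gv \<alpha> Dcal n m NC j"
  unfolding Gv_def Let_def by auto

lemma pv_pos: "0 < pv Dcal n NC j"
  unfolding pv_def by (intro divide_pos_pos) auto

lemma F_le_G:
  assumes alpha: "0 \<le> \<alpha>" and fin: "finite Dcal" and disj: "Dcal \<inter> {n+1..n+m} = {}"
    and j: "j \<in> {1..m}"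
  shows "Fv \<alpha> Dcal n m (Nset, Cdat (Dcal \<union> {n+1..n+m}) V) j
       \<le> Gv \<alpha> Dcal n m (Nset, Cdat (Dcal \<union> {n+1..n+m}) V) j"
proof (cases "n + j \<in> Nset \<and> j \<in> BH_set \<alpha> m (pv Dcal n (Nset, Cdat (Dcal \<union> {n+1..n+m}) V))")
  case False
  then show ?thesis unfolding Fv_def using Gv_nonneg by auto
next
  case True
  let ?I = "Dcal \<union> {n+1..n+m}"
  let ?NC = "(Nset, Cdat ?I V)"
  define p where "p = pv Dcal n ?NC"
  define K where "K = BH_kstar \<alpha> m p"
  define q where "q = qv Dcal n j ?NC"
  define pb where "pb = q(j := p j)"
  define N where "N = card Dcal"
  have null: "n + j \<in> Nset" and jS: "j \<in> BH_set \<alpha> m p" using True unfolding p_def by auto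
  have pj: "p j \<le> \<alpha> * real K / real m" using jS unfolding BH_set_def K_def by auto
  have Aset: "\<And>l. l \<in> {1..m} \<Longrightarrow> {i \<in> Dcal. i \<in> Nset \<and> (n + l, i) \<in> Cdat ?I V} = {i \<in> Dcal. i \<in> Nset \<and> V (n + l) \<le> V i}"
    unfolding Cdat_def by auto
  have pl: "\<And>l. l \<in> {1..m} \<Longrightarrow> p l = (1 + real (card {i \<in> Dcal. i \<in> Nset \<and> V (n + l) \<le> V i})) / (real N + 1)"
    unfolding p_def pv_def N_def using Aset by simp
  have key: "\<And>l. l \<in> {1..m} \<Longrightarrow> pb l \<le> p l \<and> (pb l \<noteq> p l \<longrightarrow> p l \<le> \<alpha> * real K / real m)"
  proof -
    fix l assume l: "l \<in> {1..m}"
    show "pb l \<le> p l \<and> (pb l \<noteq> p l \<longrightarrow> p l \<le> \<alpha> * real K / real m)"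
    proof (cases "l = j")
      case True then show ?thesis unfolding pb_def by simp
    next
      case False
      let ?A = "{i \<in> Dcal. i \<in> Nset \<and> V (n + l) \<le> V i}"
      have nl: "n + l \<notin> Dcal" using l disj by auto
      have nj: "n + j \<notin> Dcal" using j disj by auto
      have setq: "{i \<in> Dcal \<union> {n + j}. i \<in> Nset \<and> (n + l, i) \<in> Cdat ?I V}
          = ?A \<union> (if V (n + l) \<le> V (n + j) then {n + j} else {})"
        using l j null unfolding Cdat_def by auto
      have cq: "card {i \<in> Dcal \<union> {n + j}. i \<in> Nset \<and> (n + l, i) \<in> Cdat ?I V}
          = card ?A + (if V (n + l) \<le> V (n + j) then 1 else 0)"
        unfolding setq using fin nj by auto
      have pbl: "pb l = real (card ?A + (if V (n + l) \<le> V (n + j) then 1 else 0)) / (real N + 1)"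
        unfolding pb_def q_def qv_def using False cq N_def by simp
      show ?thesis
      proof (cases "V (n + l) \<le> V (n + j)")
        case True
        then show ?thesis using pbl pl[OF l] by simp
      next
        case Vlt: False
        have "pb l \<le> p l" using pbl pl[OF l] Vlt by (simp add: divide_right_mono)
        moreover have "p l \<le> p j"
        proof -
          have "?A \<subseteq> {i \<in> Dcal. i \<in> Nset \<and> V (n + j) \<le> V i}" using Vlt by auto
          then have "card ?A \<le> card {i \<in> Dcal. i \<in> Nset \<and> V (n + j) \<le> V i}"
            using fin by (intro card_mono) auto
          then show ?thesis using pl[OF l] pl[OF j] by (simp add: divide_right_mono)
        qed
        ultimately show ?thesis using pj by linarith
      qed
    qed
  qed
  have st1: "BH_kstar \<alpha> m pb = K \<and> BH_set \<alpha> m pb = BH_set \<alpha> m p"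
    unfolding K_def by (rule BH_stable[OF alpha]) (use key K_def in auto)
  have pj0: "0 < p j" unfolding p_def by (rule pv_pos)
  have st2: "BH_kstar \<alpha> m q = BH_kstar \<alpha> m pb \<and> BH_set \<alpha> m q = BH_set \<alpha> m pb"
  proof (rule BH_stable[OF alpha])
    fix l assume "l \<in> {1..m}"
    show "q l \<le> pb l" unfolding pb_def using pj0 by (cases "l = j") (auto simp: q_def qv_def)
  next
    fix l assume "l \<in> {1..m}" "q l \<noteq> pb l"
    then have "l = j" unfolding pb_def by (cases "l = j") auto
    then show "pb l \<le> \<alpha> * real (BH_kstar \<alpha> m pb) / real m" using st1 pj unfolding pb_def by simp
  qed
  have Kq: "BH_kstar \<alpha> m q = K" using st1 st2 by simp
  have K1: "1 \<le> K"
  proof (rule ccontr)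
    assume "\<not> 1 \<le> K" then have "K = 0" by simp
    then show False using pj pj0 by simp
  qed
  have cardS: "K \<le> card (BH_set \<alpha> m p)" unfolding K_def by (rule BH_kstar_le_card) (use K1 K_def in simp)
  have F: "Fv \<alpha> Dcal n m ?NC j = 1 / real (max (card (BH_set \<alpha> m p)) 1)"
    unfolding Fv_def using null jS p_def by simp
  have G: "Gv \<alpha> Dcal n m ?NC j = 1 / real K"
    unfolding Gv_def Let_def using null K1 pj Kq q_def p_def by simp
  have "1 / real (max (card (BH_set \<alpha> m p)) 1) \<le> 1 / real K"
    using K1 cardS by (intro divide_left_mono) auto
  then show ?thesis using F G by simp
qed



lemma card_transpose:
  assumes a: "a \<in> U" and b: "b \<in> U"
  shows "card {i \<in> U. P (Transposition.transpose a b i)} = card {i \<in> U. P i}"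
proof -
  let ?s = "Transposition.transpose a b"
  have sU: "\<And>i. i \<in> U \<Longrightarrow> ?s i \<in> U" using a b by (auto simp: Transposition.transpose_def)
  have "?s ` {i \<in> U. P (?s i)} = {i \<in> U. P i}"
  proof
    show "?s ` {i \<in> U. P (?s i)} \<subseteq> {i \<in> U. P i}" using sU by auto
  next
    show "{i \<in> U. P i} \<subseteq> ?s ` {i \<in> U. P (?s i)}"
    proof
      fix i assume i: "i \<in> {i \<in> U. P i}"
      then have "?s i \<in> {i \<in> U. P (?s i)}" using sU by auto
      moreover have "i = ?s (?s i)" by simp
      ultimately show "i \<in> ?s ` {i \<in> U. P (?s i)}" by blast
    qed
  qed
  moreover have "inj_on ?s {i \<in> U. P (?s i)}" by simp
  ultimately show ?thesis by (metis card_image)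
qed

lemma G_perm:
  assumes fin: "finite Dcal" and disj: "Dcal \<inter> {n+1..n+m} = {}"
    and j: "j \<in> {1..m}" and u: "u \<in> Dcal \<union> {n+j}"
  defines "I \<equiv> Dcal \<union> {n+1..n+m}"
  defines "\<sigma> \<equiv> Transposition.transpose (n+j) u"
  shows "Gv \<alpha> Dcal n m ({i \<in> I. \<sigma> i \<in> Nset}, Cdat I (V \<circ> \<sigma>)) j
    = (let K = BH_kstar \<alpha> m (qv Dcal n j (Nset, Cdat I V)) in
       if u \<in> Nset \<and> 1 \<le> K \<and>
          real (card {v \<in> Dcal \<union> {n+j}. v \<in> Nset \<and> V u \<le> V v}) / (real (card Dcal) + 1) \<le> \<alpha> * real K / real m
       then 1 / real K else 0)"
proof -
  let ?U = "Dcal \<union> {n+j}"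
  have UI: "?U \<subseteq> I" using j unfolding I_def by auto
  have nj: "n + j \<notin> Dcal" using j disj by auto
  have sj: "\<sigma> (n + j) = u" unfolding \<sigma>_def by simp
  have sU: "\<And>i. i \<in> ?U \<Longrightarrow> \<sigma> i \<in> ?U" using u unfolding \<sigma>_def by (auto simp: Transposition.transpose_def)
  have Keq: "BH_kstar \<alpha> m (qv Dcal n j ({i \<in> I. \<sigma> i \<in> Nset}, Cdat I (V \<circ> \<sigma>)))
           = BH_kstar \<alpha> m (qv Dcal n j (Nset, Cdat I V))"
  proof (rule BH_kstar_cong)
    fix l assume l: "l \<in> {1..m}"
    show "qv Dcal n j ({i \<in> I. \<sigma> i \<in> Nset}, Cdat I (V \<circ> \<sigma>)) l = qv Dcal n j (Nset, Cdat I V) l"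
    proof (cases "l = j")
      case True then show ?thesis unfolding qv_def by simp
    next
      case False
      have nlU: "n + l \<notin> ?U" using l disj False by auto
      have "u \<noteq> n + l" using nlU u by auto
      then have snl: "\<sigma> (n + l) = n + l" unfolding \<sigma>_def using False by simp
      have nlI: "n + l \<in> I" using l unfolding I_def by auto
      have e1: "{i \<in> ?U. i \<in> {i \<in> I. \<sigma> i \<in> Nset} \<and> (n + l, i) \<in> Cdat I (V \<circ> \<sigma>)}
          = {i \<in> ?U. (\<lambda>v. v \<in> Nset \<and> V (n + l) \<le> V v) (\<sigma> i)}"
        using UI nlI snl unfolding Cdat_def by auto
      have e2: "{i \<in> ?U. i \<in> Nset \<and> (n + l, i) \<in> Cdat I V} = {i \<in> ?U. (\<lambda>v. v \<in> Nset \<and> V (n + l) \<le> V v) i}"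
        using UI nlI unfolding Cdat_def by auto
      have "card {i \<in> ?U. (\<lambda>v. v \<in> Nset \<and> V (n + l) \<le> V v) (\<sigma> i)} = card {i \<in> ?U. (\<lambda>v. v \<in> Nset \<and> V (n + l) \<le> V v) i}"
        unfolding \<sigma>_def by (rule card_transpose) (use u in auto)
      then show ?thesis unfolding qv_def using False e1 e2 by simp
    qed
  qed
  have cpv: "card {i \<in> Dcal. i \<in> {i \<in> I. \<sigma> i \<in> Nset} \<and> (n + j, i) \<in> Cdat I (V \<circ> \<sigma>)}
      = card {v \<in> ?U. (v \<in> Nset \<and> V u \<le> V v) \<and> v \<noteq> u}"
  proof -
    have njI: "n + j \<in> I" using j unfolding I_def by auto
    have "{i \<in> Dcal. i \<in> {i \<in> I. \<sigma> i \<in> Nset} \<and> (n + j, i) \<in> Cdat I (V \<circ> \<sigma>)}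
        = {i \<in> ?U. (\<lambda>v. (v \<in> Nset \<and> V u \<le> V v) \<and> v \<noteq> u) (\<sigma> i)}"
    proof -
      have "\<And>i. i \<in> ?U \<Longrightarrow> (\<sigma> i \<noteq> u) = (i \<in> Dcal)"
        using nj u unfolding \<sigma>_def by (auto simp: Transposition.transpose_def)
      then show ?thesis using UI njI sj unfolding Cdat_def by auto
    qed
    also have "card \<dots> = card {v \<in> ?U. (v \<in> Nset \<and> V u \<le> V v) \<and> v \<noteq> u}"
      unfolding \<sigma>_def by (rule card_transpose) (use u in auto)
    finally show ?thesis .
  qed
  have pvu: "u \<in> Nset \<Longrightarrow> pv Dcal n ({i \<in> I. \<sigma> i \<in> Nset}, Cdat I (V \<circ> \<sigma>)) j
      = real (card {v \<in> ?U. v \<in> Nset \<and> V u \<le> V v}) / (real (card Dcal) + 1)"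
  proof -
    assume uN: "u \<in> Nset"
    have "{v \<in> ?U. v \<in> Nset \<and> V u \<le> V v} = insert u {v \<in> ?U. (v \<in> Nset \<and> V u \<le> V v) \<and> v \<noteq> u}"
      using uN u by auto
    then have "card {v \<in> ?U. v \<in> Nset \<and> V u \<le> V v} = 1 + card {v \<in> ?U. (v \<in> Nset \<and> V u \<le> V v) \<and> v \<noteq> u}"
      using fin by simp
    then show ?thesis unfolding pv_def using cpv by simp
  qed
  have nullu: "(n + j \<in> {i \<in> I. \<sigma> i \<in> Nset}) = (u \<in> Nset)"
    using sj j unfolding I_def by auto
  show ?thesis unfolding Gv_def Let_def Keq using nullu pvu by auto
qed

lemma G_sum:
  assumes alpha: "0 \<le> \<alpha>" and fin: "finite Dcal" and disj: "Dcal \<inter> {n+1..n+m} = {}"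
    and j: "j \<in> {1..m}" and inj: "inj_on V (Dcal \<union> {n+j})"
  defines "I \<equiv> Dcal \<union> {n+1..n+m}"
  shows "(\<Sum>u\<in>Dcal \<union> {n+j}. Gv \<alpha> Dcal n m
            ({i \<in> I. Transposition.transpose (n+j) u i \<in> Nset}, Cdat I (V \<circ> Transposition.transpose (n+j) u)) j)
         \<le> \<alpha> * (real (card Dcal) + 1) / real m"
proof -
  let ?U = "Dcal \<union> {n+j}"
  define K where "K = BH_kstar \<alpha> m (qv Dcal n j (Nset, Cdat I V))"
  define c where "c = (\<lambda>u. card {v \<in> ?U. v \<in> Nset \<and> V u \<le> V v})"
  define N where "N = real (card Dcal) + 1"
  have N0: "0 < N" unfolding N_def by simp
  have eq: "\<And>u. u \<in> ?U \<Longrightarrow> Gv \<alpha> Dcal n m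
            ({i \<in> I. Transposition.transpose (n+j) u i \<in> Nset}, Cdat I (V \<circ> Transposition.transpose (n+j) u)) j
         = (if u \<in> Nset \<and> 1 \<le> K \<and> real (c u) / N \<le> \<alpha> * real K / real m then 1 / real K else 0)"
    unfolding K_def c_def N_def I_def using G_perm[OF fin disj j] by (simp add: Let_def)
  show ?thesis
  proof (cases "1 \<le> K")
    case False
    then show ?thesis using eq alpha by (simp add: sum.neutral)
  next
    case K1: True
    define T where "T = \<alpha> * real K / real m * N"
    have T0: "0 \<le> T" unfolding T_def using alpha N0 by simp
    have iff: "\<And>u. (real (c u) / N \<le> \<alpha> * real K / real m) = (real (c u) \<le> T)"
      unfolding T_def using N0 by (simp add: divide_le_eq)
    have "(\<Sum>u\<in>?U. Gv \<alpha> Dcal n m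
            ({i \<in> I. Transposition.transpose (n+j) u i \<in> Nset}, Cdat I (V \<circ> Transposition.transpose (n+j) u)) j)
        = (\<Sum>u\<in>?U. if u \<in> {u \<in> ?U \<inter> Nset. real (c u) \<le> T} then 1 / real K else 0)"
      using eq K1 iff by (intro sum.cong) auto
    also have "\<dots> = (\<Sum>u\<in>?U \<inter> {u \<in> ?U \<inter> Nset. real (c u) \<le> T}. 1 / real K)"
      using fin by (subst sum.inter_restrict) auto
    also have "?U \<inter> {u \<in> ?U \<inter> Nset. real (c u) \<le> T} = {u \<in> ?U \<inter> Nset. real (c u) \<le> T}" by auto
    also have "(\<Sum>u\<in>{u \<in> ?U \<inter> Nset. real (c u) \<le> T}. 1 / real K) = real (card {u \<in> ?U \<inter> Nset. real (c u) \<le> T}) * (1 / real K)"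
      by simp
    also have "{u \<in> ?U \<inter> Nset. real (c u) \<le> T}
             = {u \<in> ?U \<inter> Nset. real (card {v \<in> ?U \<inter> Nset. V u \<le> V v}) \<le> T}"
    proof -
      have "\<And>u. {v \<in> ?U. v \<in> Nset \<and> V u \<le> V v} = {v \<in> ?U \<inter> Nset. V u \<le> V v}" by auto
      then show ?thesis unfolding c_def by simp
    qed
    also have "real (card \<dots>) * (1 / real K) \<le> T * (1 / real K)"
      by (intro mult_right_mono card_rank_le) (use fin inj T0 in \<open>auto intro: inj_on_subset\<close>)
    also have "T * (1 / real K) = \<alpha> * (real (card Dcal) + 1) / real m"
      unfolding T_def N_def using K1 by simp
    finally show ?thesis .
  qed
qed



lemma D_meas:
  fixes MX :: "'x measure" and ME :: "'e measure" and Align :: "'y \<Rightarrow> 'e \<Rightarrow> real"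
    and f :: "'x \<Rightarrow> 'y" and g :: "'x \<Rightarrow> real" and H :: "nat set \<times> (nat \<times> nat) set \<Rightarrow> real"
  assumes Align_meas: "(\<lambda>z. Align (f (fst z)) (snd z)) \<in> borel_measurable (MX \<Otimes>\<^sub>M ME)"
    and g_meas: "g \<in> borel_measurable MX" and fin: "finite I"
  shows "(\<lambda>z. H ({i\<in>I. Align (f (fst (z i))) (snd (z i)) \<le> c},
                {(a,b)\<in>I\<times>I. g (fst (z a)) \<le> g (fst (z b))}))
         \<in> borel_measurable (PiM I (\<lambda>_. MX \<Otimes>\<^sub>M ME))"
proof -
  let ?D = "\<lambda>z. ({i\<in>I. Align (f (fst (z i))) (snd (z i)) \<le> c},
                {(a,b)\<in>I\<times>I. g (fst (z a)) \<le> g (fst (z b))})"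
  have A1: "\<And>i. i \<in> I \<Longrightarrow> (\<lambda>z. Align (f (fst (z i))) (snd (z i))) \<in> borel_measurable (PiM I (\<lambda>_. MX \<Otimes>\<^sub>M ME))"
  proof -
    fix i assume "i \<in> I"
    then have "(\<lambda>z. z i) \<in> measurable (PiM I (\<lambda>_. MX \<Otimes>\<^sub>M ME)) (MX \<Otimes>\<^sub>M ME)"
      by (rule measurable_component_singleton)
    from measurable_compose[OF this Align_meas] show "?thesis i" by simp
  qed
  have G1: "\<And>i. i \<in> I \<Longrightarrow> (\<lambda>z. g (fst (z i))) \<in> borel_measurable (PiM I (\<lambda>_. MX \<Otimes>\<^sub>M ME))"
  proof -
    fix i assume "i \<in> I"
    then have "(\<lambda>z. z i) \<in> measurable (PiM I (\<lambda>_. MX \<Otimes>\<^sub>M ME)) (MX \<Otimes>\<^sub>M ME)"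
      by (rule measurable_component_singleton)
    from measurable_compose[OF measurable_compose[OF this measurable_fst] g_meas] show "?thesis i" by simp
  qed
  have "?D \<in> measurable (PiM I (\<lambda>_. MX \<Otimes>\<^sub>M ME)) (count_space (Pow I \<times> Pow (I \<times> I)))"
  proof (subst measurable_count_space_eq2, goal_cases)
    case 1 then show ?case using fin by auto
  next
    case 2
    show ?case
    proof (intro conjI ballI)
      show "?D \<in> space (PiM I (\<lambda>_. MX \<Otimes>\<^sub>M ME)) \<rightarrow> Pow I \<times> Pow (I \<times> I)" by auto
    next
      fix XY assume XY: "XY \<in> Pow I \<times> Pow (I \<times> I)"
      obtain X Y where XYd: "XY = (X, Y)" by (cases XY)
      have eq: "?D -` {XY} \<inter> space (PiM I (\<lambda>_. MX \<Otimes>\<^sub>M ME)) =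
         {z \<in> space (PiM I (\<lambda>_. MX \<Otimes>\<^sub>M ME)). (\<forall>i\<in>I. (Align (f (fst (z i))) (snd (z i)) \<le> c) = (i \<in> X)) \<and>
            (\<forall>a\<in>I. \<forall>b\<in>I. (g (fst (z a)) \<le> g (fst (z b))) = ((a,b) \<in> Y))}"
        using XY unfolding XYd by (auto simp: set_eq_iff)
      have pA: "\<And>i. i \<in> I \<Longrightarrow> Measurable.pred (PiM I (\<lambda>_. MX \<Otimes>\<^sub>M ME)) (\<lambda>z. (Align (f (fst (z i))) (snd (z i)) \<le> c) = (i \<in> X))"
        using A1 by measurable
      have pG: "\<And>a b. a \<in> I \<Longrightarrow> b \<in> I \<Longrightarrow> Measurable.pred (PiM I (\<lambda>_. MX \<Otimes>\<^sub>M ME)) (\<lambda>z. (g (fst (z a)) \<le> g (fst (z b))) = ((a,b) \<in> Y))"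
      proof -
        fix a b assume ab: "a \<in> I" "b \<in> I"
        have p1: "Measurable.pred (PiM I (\<lambda>_. MX \<Otimes>\<^sub>M ME)) (\<lambda>z. g (fst (z a)) \<le> g (fst (z b)))"
          unfolding pred_def by (rule borel_measurable_le[OF G1[OF ab(1)] G1[OF ab(2)]])
        have p2: "Measurable.pred (PiM I (\<lambda>_. MX \<Otimes>\<^sub>M ME)) (\<lambda>z. (a, b) \<in> Y)"
          by (cases "(a,b) \<in> Y") (simp_all add: pred_def)
        show "?thesis a b" by (rule pred_intros_logic(6)[OF p1 p2])
      qed
      show "?D -` {XY} \<inter> space (PiM I (\<lambda>_. MX \<Otimes>\<^sub>M ME)) \<in> sets (PiM I (\<lambda>_. MX \<Otimes>\<^sub>M ME))"
        unfolding eq using pA pG fin by measurable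
    qed
  qed
  then show ?thesis by (rule measurable_compose) (rule borel_measurable_count_space)
qed


lemma Fv_bound: "\<bar>Fv \<alpha> Dcal n m NC j\<bar> \<le> 1"
  unfolding Fv_def by auto

theorem theorem1:
  fixes M :: "'w measure"
    and MX :: "'x measure" and ME :: "'e measure"
    and f :: "'x \<Rightarrow> 'y" and Align :: "'y \<Rightarrow> 'e \<Rightarrow> real"
    and c :: real and g :: "'x \<Rightarrow> real" and Mbar :: real
    and Dcal :: "nat set" and n m :: nat
    and Z :: "nat \<Rightarrow> 'w \<Rightarrow> 'x \<times> 'e"
    and \<alpha> :: real
  assumes prob: "prob_space M"
    and Align_meas: "(\<lambda>z. Align (f (fst z)) (snd z)) \<in> borel_measurable (MX \<Otimes>\<^sub>M ME)"
    and g_meas: "g \<in> borel_measurable MX"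
    and Mbar_pos: "Mbar > 0"
    and g_bdd: "\<And>x. \<bar>g x\<bar> \<le> Mbar"
    and Dcal_fin: "finite Dcal"
    and Dcal_disj: "Dcal \<inter> {n+1..n+m} = {}"
    and Z_meas: "\<And>i. i \<in> Dcal \<union> {n+1..n+m} \<Longrightarrow> Z i \<in> measurable M (MX \<Otimes>\<^sub>M ME)"
    and exch: "\<And>j \<pi>. j \<in> {1..m} \<Longrightarrow> \<pi> permutes (Dcal \<union> {n+j}) \<Longrightarrow>
        distr M (PiM (Dcal \<union> {n+1..n+m}) (\<lambda>_. MX \<Otimes>\<^sub>M ME))
             (\<lambda>\<omega>. \<lambda>i\<in>Dcal \<union> {n+1..n+m}. Z (\<pi> i) \<omega>)
      = distr M (PiM (Dcal \<union> {n+1..n+m}) (\<lambda>_. MX \<Otimes>\<^sub>M ME))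
             (\<lambda>\<omega>. \<lambda>i\<in>Dcal \<union> {n+1..n+m}. Z i \<omega>)"
    and no_ties: "AE \<omega> in M. inj_on (\<lambda>i. g (fst (Z i \<omega>))) (Dcal \<union> {n+1..n+m})"
    and alpha: "0 < \<alpha>" "\<alpha> < 1"
  shows "prob_space.expectation M (\<lambda>\<omega>.
      (let A = (\<lambda>i. Align (f (fst (Z i \<omega>))) (snd (Z i \<omega>)));
           Ahat = (\<lambda>i. g (fst (Z i \<omega>)));
           S = CA_sel \<alpha> Dcal n m c A Ahat
       in real (card {j \<in> {1..m}. A (n + j) \<le> c \<and> j \<in> S}) / real (max (card S) 1)))
    \<le> \<alpha>"
proof -
  interpret prob_space M by (rule prob)
  define I where "I = Dcal \<union> {n+1..n+m}"
  define PI where "PI = PiM I (\<lambda>_. MX \<Otimes>\<^sub>M ME)"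
  define zeta where "zeta = (\<lambda>\<pi> \<omega>. \<lambda>i\<in>I. Z (\<pi> i) \<omega>)"
  define D where "D = (\<lambda>z :: nat \<Rightarrow> 'x \<times> 'e. ({i \<in> I. Align (f (fst (z i))) (snd (z i)) \<le> c},
                {(a,b)\<in>I\<times>I. g (fst (z a)) \<le> g (fst (z b))}))"
  define F where "F = (\<lambda>j \<pi> \<omega>. Fv \<alpha> Dcal n m (D (zeta \<pi> \<omega>)) j)"
  define N where "N = real (card Dcal) + 1"
  have finI: "finite I" unfolding I_def using Dcal_fin by auto
  have zeta_meas: "\<And>\<pi>. (\<And>i. i \<in> I \<Longrightarrow> \<pi> i \<in> I) \<Longrightarrow> zeta \<pi> \<in> measurable M PI"
    unfolding zeta_def PI_def by (rule measurable_restrict) (use Z_meas I_def in auto)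
  have H_meas: "\<And>H :: _ \<Rightarrow> real. (\<lambda>z. H (D z)) \<in> borel_measurable PI"
    unfolding D_def PI_def by (rule D_meas[where Align=Align and f=f and g=g and c=c and I=I and MX=MX and ME=ME, OF Align_meas g_meas finI])
  have F_meas: "\<And>j \<pi>. (\<And>i. i \<in> I \<Longrightarrow> \<pi> i \<in> I) \<Longrightarrow> F j \<pi> \<in> borel_measurable M"
  proof -
    fix j \<pi> assume "\<And>i. i \<in> I \<Longrightarrow> \<pi> i \<in> I"
    from measurable_compose[OF zeta_meas[OF this] H_meas[of "\<lambda>d. Fv \<alpha> Dcal n m d j"]]
    show "F j \<pi> \<in> borel_measurable M" unfolding F_def .
  qed
  have F_int: "\<And>j \<pi>. (\<And>i. i \<in> I \<Longrightarrow> \<pi> i \<in> I) \<Longrightarrow> integrable M (F j \<pi>)"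
    by (rule integrable_const_bound[where B=1]) (use F_meas Fv_bound F_def in auto)
  have idI: "\<And>i. i \<in> I \<Longrightarrow> id i \<in> I" by simp
  have integrand: "\<And>\<omega>. (let A = (\<lambda>i. Align (f (fst (Z i \<omega>))) (snd (Z i \<omega>)));
           Ahat = (\<lambda>i. g (fst (Z i \<omega>)));
           S = CA_sel \<alpha> Dcal n m c A Ahat
       in real (card {j \<in> {1..m}. A (n + j) \<le> c \<and> j \<in> S}) / real (max (card S) 1))
      = (\<Sum>j\<in>{1..m}. F j id \<omega>)"
  proof -
    fix \<omega>
    define A where "A = (\<lambda>i. Align (f (fst (Z i \<omega>))) (snd (Z i \<omega>)))"
    define Ahat where "Ahat = (\<lambda>i. g (fst (Z i \<omega>)))"
    define S where "S = CA_sel \<alpha> Dcal n m c A Ahat"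
    have pveq: "\<And>j. j \<in> {1..m} \<Longrightarrow> conf_pval Dcal n c A Ahat j = pv Dcal n (D (zeta id \<omega>)) j"
    proof -
      fix j assume j: "j \<in> {1..m}"
      have "{i \<in> Dcal. A i \<le> c \<and> Ahat i \<ge> Ahat (n + j)}
          = {i \<in> Dcal. i \<in> fst (D (zeta id \<omega>)) \<and> (n + j, i) \<in> snd (D (zeta id \<omega>))}"
        using j unfolding A_def Ahat_def D_def zeta_def I_def by auto
      then show "conf_pval Dcal n c A Ahat j = pv Dcal n (D (zeta id \<omega>)) j"
        unfolding conf_pval_def pv_def by simp
    qed
    have Seq: "S = BH_set \<alpha> m (pv Dcal n (D (zeta id \<omega>)))"
      unfolding S_def CA_sel_def by (rule BH_set_cong) (rule pveq)
    have Fj: "\<And>j. j \<in> {1..m} \<Longrightarrow> F j id \<omega> = (if j \<in> {j \<in> {1..m}. A (n + j) \<le> c \<and> j \<in> S} then 1 / real (max (card S) 1) else 0)"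
    proof -
      fix j assume j: "j \<in> {1..m}"
      have "(n + j \<in> fst (D (zeta id \<omega>))) = (A (n + j) \<le> c)"
        using j unfolding A_def D_def zeta_def I_def by auto
      then show "?thesis j" unfolding F_def Fv_def Seq[symmetric] using j by auto
    qed
    have "(\<Sum>j\<in>{1..m}. F j id \<omega>) = (\<Sum>j\<in>{1..m}. if j \<in> {j \<in> {1..m}. A (n + j) \<le> c \<and> j \<in> S} then 1 / real (max (card S) 1) else 0)"
      using Fj by (rule sum.cong[OF refl])
    also have "\<dots> = (\<Sum>j\<in>{1..m} \<inter> {j \<in> {1..m}. A (n + j) \<le> c \<and> j \<in> S}. 1 / real (max (card S) 1))"
      by (subst sum.inter_restrict) auto
    also have "{1..m} \<inter> {j \<in> {1..m}. A (n + j) \<le> c \<and> j \<in> S} = {j \<in> {1..m}. A (n + j) \<le> c \<and> j \<in> S}"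
      by blast
    also have "(\<Sum>j\<in>{j \<in> {1..m}. A (n + j) \<le> c \<and> j \<in> S}. 1 / real (max (card S) 1)) = real (card {j \<in> {1..m}. A (n + j) \<le> c \<and> j \<in> S}) / real (max (card S) 1)"
      by simp
    finally have eqq: "(\<Sum>j\<in>{1..m}. F j id \<omega>) = real (card {j \<in> {1..m}. A (n + j) \<le> c \<and> j \<in> S}) / real (max (card S) 1)" .
    show "?thesis \<omega>" unfolding Let_def A_def[symmetric] Ahat_def[symmetric] S_def[symmetric] by (rule eqq[symmetric])
  qed
  have perj: "\<And>j. j \<in> {1..m} \<Longrightarrow> integral\<^sup>L M (F j id) \<le> \<alpha> / real m"
  proof -
    fix j assume j: "j \<in> {1..m}"
    let ?U = "Dcal \<union> {n+j}"
    let ?s = "\<lambda>u. Transposition.transpose (n+j) u"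
    have UI: "?U \<subseteq> I" using j unfolding I_def by auto
    have sI: "\<And>u i. u \<in> ?U \<Longrightarrow> i \<in> I \<Longrightarrow> ?s u i \<in> I"
      using UI by (auto simp: Transposition.transpose_def)
    have perm: "\<And>u. u \<in> ?U \<Longrightarrow> ?s u permutes ?U" by (rule permutes_swap_id) auto
    have inteq: "\<And>u. u \<in> ?U \<Longrightarrow> integral\<^sup>L M (F j (?s u)) = integral\<^sup>L M (F j id)"
    proof -
      fix u assume u: "u \<in> ?U"
      have d: "distr M PI (zeta (?s u)) = distr M PI (zeta id)"
        using exch[OF j perm[OF u]] unfolding PI_def zeta_def I_def by simp
      have "integral\<^sup>L M (F j (?s u)) = integral\<^sup>L (distr M PI (zeta (?s u))) (\<lambda>z. Fv \<alpha> Dcal n m (D z) j)"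
        unfolding F_def by (rule integral_distr[symmetric]) (use zeta_meas sI u H_meas in auto)
      also have "\<dots> = integral\<^sup>L (distr M PI (zeta id)) (\<lambda>z. Fv \<alpha> Dcal n m (D z) j)" unfolding d ..
      also have "\<dots> = integral\<^sup>L M (F j id)"
        unfolding F_def by (rule integral_distr) (use zeta_meas idI H_meas in auto)
      finally show "?thesis u" .
    qed
    have "N * integral\<^sup>L M (F j id) = (\<Sum>u\<in>?U. integral\<^sup>L M (F j (?s u)))"
    proof -
      have nj: "n + j \<notin> Dcal" using j Dcal_disj by auto
      have "(\<Sum>u\<in>?U. integral\<^sup>L M (F j (?s u))) = (\<Sum>u\<in>?U. integral\<^sup>L M (F j id))"
        using inteq by (rule sum.cong[OF refl])
      also have "\<dots> = real (card ?U) * integral\<^sup>L M (F j id)" by simp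
      also have "real (card ?U) = N" unfolding N_def using nj Dcal_fin by simp
      finally show ?thesis by (rule sym)
    qed
    also have "\<dots> = integral\<^sup>L M (\<lambda>\<omega>. \<Sum>u\<in>?U. F j (?s u) \<omega>)"
      by (rule Bochner_Integration.integral_sum[where f="\<lambda>u. F j (?s u)" and I="?U", symmetric]) (use F_int sI in auto)
    also have "\<dots> \<le> integral\<^sup>L M (\<lambda>\<omega>. \<alpha> * N / real m)"
    proof (rule integral_mono_AE)
      show "integrable M (\<lambda>\<omega>. \<Sum>u\<in>?U. F j (?s u) \<omega>)"
        by (rule Bochner_Integration.integrable_sum[where f="\<lambda>u. F j (?s u)" and I="?U"]) (use F_int sI in auto)
      show "integrable M (\<lambda>\<omega>. \<alpha> * N / real m)" by simp
      show "AE \<omega> in M. (\<Sum>u\<in>?U. F j (?s u) \<omega>) \<le> \<alpha> * N / real m"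
        using no_ties
      proof eventually_elim
        case (elim \<omega>)
        define V where "V = (\<lambda>i. g (fst (Z i \<omega>)))"
        define Ns where "Ns = {i \<in> I. Align (f (fst (Z i \<omega>))) (snd (Z i \<omega>)) \<le> c}"
        have Deq: "\<And>u. u \<in> ?U \<Longrightarrow> D (zeta (?s u) \<omega>) = ({i \<in> I. ?s u i \<in> Ns}, Cdat I (V \<circ> ?s u))"
          unfolding D_def zeta_def Ns_def Cdat_def V_def using sI by auto
        have "(\<Sum>u\<in>?U. F j (?s u) \<omega>) \<le> (\<Sum>u\<in>?U. Gv \<alpha> Dcal n m ({i \<in> I. ?s u i \<in> Ns}, Cdat I (V \<circ> ?s u)) j)"
        proof (rule sum_mono)
          fix u assume u: "u \<in> ?U"
          show "F j (?s u) \<omega> \<le> Gv \<alpha> Dcal n m ({i \<in> I. ?s u i \<in> Ns}, Cdat I (V \<circ> ?s u)) j"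
            unfolding F_def Deq[OF u] I_def
            by (rule F_le_G) (use alpha Dcal_fin Dcal_disj j in auto)
        qed
        also have "\<dots> \<le> \<alpha> * N / real m"
        proof -
          have injU: "inj_on V ?U" using inj_on_subset[OF elim[folded I_def] UI] unfolding V_def .
          show ?thesis unfolding N_def I_def
            by (rule G_sum) (use alpha Dcal_fin Dcal_disj j injU in auto)
        qed
        finally show ?case .
      qed
    qed
    also have "\<dots> = \<alpha> * N / real m" by (simp add: prob_space)
    finally have "N * integral\<^sup>L M (F j id) \<le> N * (\<alpha> / real m)" by (simp add: mult.commute)
    moreover have "0 < N" unfolding N_def by simp
    ultimately show "integral\<^sup>L M (F j id) \<le> \<alpha> / real m" by (metis mult_le_cancel_left_pos)
  qed
  have "prob_space.expectation M (\<lambda>\<omega>.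
      (let A = (\<lambda>i. Align (f (fst (Z i \<omega>))) (snd (Z i \<omega>)));
           Ahat = (\<lambda>i. g (fst (Z i \<omega>)));
           S = CA_sel \<alpha> Dcal n m c A Ahat
       in real (card {j \<in> {1..m}. A (n + j) \<le> c \<and> j \<in> S}) / real (max (card S) 1)))
     = integral\<^sup>L M (\<lambda>\<omega>. \<Sum>j\<in>{1..m}. F j id \<omega>)"
    using integrand by simp
  also have "\<dots> = (\<Sum>j\<in>{1..m}. integral\<^sup>L M (F j id))"
    by (rule Bochner_Integration.integral_sum) (use F_int idI in auto)
  also have "\<dots> \<le> (\<Sum>j\<in>{1..m}. \<alpha> / real m)" by (rule sum_mono) (rule perj)
  also have "\<dots> \<le> \<alpha>" using alpha by (cases "m = 0") auto
  finally show ?thesis .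
qed


end
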